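(* Let $A$ be a closed invariant subspace of $C(\mathbb{Z}^d)\otimes\mathbb{C}^r$, and let $A_+\subseteq C(\mathbb{Z}^d_+)\otimes\mathbb{C}^r$ be the set of restrictions to $\mathbb{Z}^d_+$ of elements of $A$. Let $\mathcal{P}$ be an invariant linear space of vectorial $pg$-sequences contained in $A$ whose restrictions to $\mathbb{Z}^d_+$ form a dense subset of $A_+$. Then $\mathcal{P}$ is dense in $A$.
   Context: $C(\mathbb{Z}^d)\otimes\mathbb{C}^r$ (resp. $C(\mathbb{Z}^d_+)\otimes\mathbb{C}^r$) is the space of all functions $\mathbb{Z}^d\to\mathbb{C}^r$ (resp. $\mathbb{Z}^d_+\to\mathbb{C}^r$) with the topology of coordinatewise convergence. Shifts: $(W_iu)(k)=u(k-e_i)$; a subspace is invariant if $W_i$ maps it onto itself for each $i$. A vectorial $pg$-sequence is a function $k\mapsto\omega^kh(k)$ with $\omega\in(\mathbb{C}\setminus\{0\})^d$, $\omega^k=\prod_i\omega_i^{k_i}$, and $h\in\mathbb{C}[z_1,\dots,z_d]\otimes\mathbb{C}^r$. *)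

theory Defs
  imports "HOL-Analysis.Analysis"
begin

text \<open>The type int^'d => complex^'r carries the product topology (instance from
  Function_Topology), i.e. the topology of coordinatewise convergence.\<close>

type_synonym ('d, 'r) seq = "int ^ 'd \<Rightarrow> complex ^ 'r"

definition shift :: "'d \<Rightarrow> ('d::finite, 'r::finite) seq \<Rightarrow> ('d, 'r) seq" where
  "shift i u = (\<lambda>k. u (k - axis i 1))"

definition invariant :: "('d::finite, 'r::finite) seq set \<Rightarrow> bool" where
  "invariant S \<longleftrightarrow> (\<forall>i. shift i ` S = S)"

definition clinear_space :: "('d::finite, 'r::finite) seq set \<Rightarrow> bool" where
  "clinear_space S \<longleftrightarrow> (\<lambda>k. 0) \<in> S \<and> (\<forall>u\<in>S. \<forall>v\<in>S. (\<lambda>k. u k + v k) \<in> S)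
      \<and> (\<forall>c::complex. \<forall>u\<in>S. (\<lambda>k. c *s u k) \<in> S)"

text \<open>Vectorial pg-sequence: k |-> omega^k h(k), omega in (C\{0})^d, h a C^r-valued
  polynomial in d variables, written as a finite sum of monomials with vector coefficients.\<close>
definition pg_seq :: "('d::finite, 'r::finite) seq \<Rightarrow> bool" where
  "pg_seq u \<longleftrightarrow> (\<exists>(\<omega>::complex^'d) (S::(nat^'d) set) (c::nat^'d \<Rightarrow> complex^'r).
      (\<forall>i. \<omega> $ i \<noteq> 0) \<and> finite S \<and>
      u = (\<lambda>k. (\<Prod>i\<in>UNIV. (\<omega> $ i) powi (k $ i)) *s
               (\<Sum>\<alpha>\<in>S. (\<Prod>i\<in>UNIV. (of_int (k $ i) :: complex) ^ (\<alpha> $ i)) *s c \<alpha>)))"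

text \<open>A function on Z^d_+ is represented by its extension
  by 0 outside Z^d_+; the set of such functions is closed in the product topology and its
  subspace topology is the product topology of C(Z^d_+) (x) C^r.\<close>
definition Zplus :: "(int ^ 'd) set" where
  "Zplus = {k. \<forall>i. k $ i \<ge> 0}"

definition restr :: "('d::finite, 'r::finite) seq \<Rightarrow> ('d, 'r) seq" where
  "restr u = (\<lambda>k. if k \<in> Zplus then u k else 0)"

end

theory Submission
  imports Defs
begin

lemma good_all:
  fixes S :: "('d::finite, 'r::finite) seq set"
  assumes inv: "invariant S"
  shows "\<forall>u\<in>S. (\<lambda>k. u (k - t)) \<in> S"
proof -
  define G where "G = {t::int^'d. \<forall>u\<in>S. (\<lambda>k. u (k - t)) \<in> S}"
  have add: "a + b \<in> G" if "a \<in> G" "b \<in> G" for a b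
  proof -
    { fix u assume "u \<in> S"
      then have "(\<lambda>k. u (k - a)) \<in> S" using that(1) by (auto simp: G_def)
      then have "(\<lambda>k. (\<lambda>k. u (k - a)) (k - b)) \<in> S" using that(2) by (auto simp: G_def)
      then have "(\<lambda>k. u (k - (a + b))) \<in> S" by (simp add: algebra_simps diff_diff_eq) }
    then show ?thesis by (auto simp: G_def)
  qed
  have zero: "0 \<in> G" by (simp add: G_def)
  have pos: "axis i 1 \<in> G" for i
  proof -
    have "shift i ` S = S" using inv by (simp add: invariant_def)
    then show ?thesis by (auto simp: G_def shift_def)
  qed
  have neg: "- axis i 1 \<in> G" for i
  proof -
    have eq: "shift i ` S = S" using inv by (simp add: invariant_def)
    { fix u assume u: "u \<in> S"
      then obtain v where v: "v \<in> S" "u = shift i v" using eq by (metis imageE)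
      have "(\<lambda>k. u (k - - axis i 1)) = v" using v(2) by (simp add: shift_def)
      with v have "(\<lambda>k. u (k - - axis i 1)) \<in> S" by simp }
    then show ?thesis by (auto simp: G_def)
  qed
  have line: "(\<chi> j. if j = i then m else 0) \<in> G" for i and m :: int
  proof (induction m rule: int_induct[where k=0])
    case base
    have "(\<chi> j. if j = i then (0::int) else 0) = 0" by (simp add: vec_eq_iff)
    then show ?case using zero by simp
  next
    case (step1 m)
    have "(\<chi> j. if j = i then m + 1 else 0) = (\<chi> j. if j = i then m else 0) + axis i 1"
      by (simp add: vec_eq_iff axis_def)
    then show ?case using add[OF step1(2) pos] by simp
  next
    case (step2 m)
    have "(\<chi> j. if j = i then m - 1 else 0) = (\<chi> j. if j = i then m else 0) + - axis i 1"
      by (simp add: vec_eq_iff axis_def)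
    then show ?case using add[OF step2(2) neg] by simp
  qed
  have fin: "(\<Sum>i\<in>F. (\<chi> j. if j = i then t $ i else 0)) \<in> G" if "finite F" for F :: "'d set"
    using that
  proof (induction F rule: finite_induct)
    case empty then show ?case using zero by simp
  next
    case (insert x F) then show ?case using add line by simp
  qed
  have "t = (\<Sum>i\<in>UNIV. (\<chi> j. if j = i then t $ i else 0))"
    by (simp add: vec_eq_iff)
  then have "t \<in> G" using fin[of UNIV] by simp
  then show ?thesis by (simp add: G_def)
qed

theorem lemma4p9:
  fixes A P :: "('d::finite, 'r::finite) seq set"
  assumes "closed A" and "clinear_space A" and "invariant A"
    and "clinear_space P" and "invariant P"
    and "\<forall>u\<in>P. pg_seq u" and "P \<subseteq> A"
    and "restr ` A \<subseteq> closure (restr ` P)"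
  shows "A \<subseteq> closure P"
proof
  fix u assume uA: "u \<in> A"
  show "u \<in> closure P"
    unfolding closure_iff_nhds_not_empty
  proof (intro allI impI)
    fix B S assume SB: "S \<subseteq> B" and oS: "open S" and uS: "u \<in> S"
    have "openin (product_topology (\<lambda>i. euclidean) UNIV) S" using oS by (simp add: open_fun_def)
    from product_topology_open_contains_basis[OF this uS]
    obtain X where X: "u \<in> (\<Pi>\<^sub>E i\<in>UNIV. X i)" "\<And>i. open (X i)"
      "finite {i. X i \<noteq> UNIV}" "(\<Pi>\<^sub>E i\<in>UNIV. X i) \<subseteq> S"
      by auto
    define F where "F = {i. X i \<noteq> UNIV}"
    define M where "M = (\<Sum>k\<in>F. \<Sum>i\<in>UNIV. \<bar>k $ i\<bar>)"
    define t :: "int^'d" where "t = (\<chi> i. M)"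
    have Mge: "\<bar>k $ i\<bar> \<le> M" if "k \<in> F" for k i
    proof -
      have "\<bar>k $ i\<bar> \<le> (\<Sum>i\<in>UNIV. \<bar>k $ i\<bar>)"
        by (rule member_le_sum) auto
      also have "\<dots> \<le> M" unfolding M_def
        by (rule member_le_sum[where f="\<lambda>k. \<Sum>i\<in>UNIV. \<bar>k $ i\<bar>"]) (use that X(3) F_def in auto)
      finally show ?thesis .
    qed
    have Zp: "k + t \<in> Zplus" if "k \<in> F" for k
      unfolding Zplus_def t_def
    proof (clarify)
      fix i have "\<bar>k $ i\<bar> \<le> M" using Mge[OF that] .
      then show "0 \<le> (k + (\<chi> i. M)) $ i" by simp
    qed
    define w where "w = (\<lambda>k. u (k - t))"
    have wA: "w \<in> A" using good_all[OF assms(3)] uA by (simp add: w_def)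
    have rw: "restr w \<in> closure (restr ` P)" using assms(8) wA by auto
    define V where "V = (\<Pi>\<^sub>E k\<in>UNIV. X (k - t))"
    have finV: "{k. X (k - t) \<noteq> UNIV} = (\<lambda>k. k + t) ` F"
    proof (rule set_eqI, rule iffI)
      fix k assume "k \<in> {k. X (k - t) \<noteq> UNIV}"
      then have "k - t \<in> F" by (simp add: F_def)
      then show "k \<in> (\<lambda>k. k + t) ` F" by (metis diff_add_cancel image_eqI)
    qed (auto simp: F_def)
    have oV: "open V" unfolding V_def
      by (rule open_PiE) (use X(2) X(3) finV F_def in auto)
    have uX: "u k \<in> X k" for k using X(1) by auto
    have rwV: "restr w \<in> V"
    proof -
      { fix k
        have "restr w k \<in> X (k - t)"
        proof (cases "k \<in> Zplus")
          case True then show ?thesis by (simp add: restr_def w_def uX)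
        next
          case False
          then have "k - t \<notin> F" using Zp[of "k - t"] by auto
          then show ?thesis by (simp add: F_def)
        qed }
      then show ?thesis by (simp add: V_def PiE_iff)
    qed
    from rw[unfolded closure_iff_nhds_not_empty] oV rwV
    have "restr ` P \<inter> V \<noteq> {}" by blast
    then obtain p where pP: "p \<in> P" and pV: "restr p \<in> V" by auto
    define q where "q = (\<lambda>k. p (k - (- t)))"
    have qP: "q \<in> P" using good_all[OF assms(5), of "- t"] pP unfolding q_def by blast
    have "q \<in> (\<Pi>\<^sub>E i\<in>UNIV. X i)"
    proof -
      { fix k
        have "q k \<in> X k"
        proof (cases "k \<in> F")
          case True
          have "restr p (k + t) \<in> X (k + t - t)" using pV unfolding V_def PiE_iff by blast
          then show ?thesis using Zp[OF True] by (simp add: restr_def q_def)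
        next
          case False then show ?thesis by (simp add: F_def)
        qed }
      then show ?thesis by (simp add: PiE_iff)
    qed
    then have "q \<in> B" using X(4) SB by auto
    with qP show "P \<inter> B \<noteq> {}" by auto
  qed
qed

end
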